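(* Let $\Sigma$ be a finite set of tokens, $c$ a context, $M_1,M_2,M_b$ language models, and $f$ a min-bounded function with constant $\lambda_f$. Let $t\in\Sigma$ be a token that is $\alpha$-exposed by $M_1$ over $M_b$ at $c$ and $\beta$-exposed by $M_2$ over $M_b$ at $c$. Let $M:=DAGG_f(M_1,M_2)$. Then $t$ is $\le\gamma\min(\alpha,\beta)$-exposed by $M$ over $M_b$ at $c$, where $\gamma=\lambda_f\,\overline{f_c}(M_1,M_2)$.
   Context: Let $n=|\Sigma|$. A context is a finite sequence of tokens from $\Sigma$. A language model $M$ assigns to every context $c$ and token $t\in\Sigma$ a probability $p_M(t\mid c)>0$, with $\sum_{t\in\Sigma}p_M(t\mid c)=1$. For $g:\Sigma\to\mathbb{R}_{>0}$, $GM(g(t)):=\exp\big(\tfrac1n\sum_{t\in\Sigma}\log g(t)\big)$. Typical probability: $tp_c(M):=GM(p_M(t\mid c))$; relative probability: $rp_M(t\mid c):=p_M(t\mid c)/tp_c(M)$. Typical probability ratio: $tpr_c(M_1,M_2):=GM\big(\tfrac{p_{M_1}(t\mid c)}{p_{M_2}(t\mid c)}\big)$. A token $t$ is $\alpha$-exposed by $M_1$ over $M_2$ at $c$ if $\frac{p_{M_1}(t\mid c)}{p_{M_2}(t\mid c)\cdot tpr_c(M_1,M_2)}=\alpha$; it is $\le\alpha$-exposed if it is $\beta$-exposed for some $\beta\le\alpha$. A function $f:\mathbb{R}_{>0}^2\to\mathbb{R}_{>0}$ is proper-avg if $\min(x,y)\le f(x,y)\le\max(x,y)$ for all $x,y>0$;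 it is min-bounded if it is proper-avg and there is a constant $\lambda_f$ with $f(x,y)\le\lambda_f\min(x,y)$ for all $x,y>0$. Set $M(t\mid c):=f(rp_{M_1}(t\mid c),rp_{M_2}(t\mid c))$; $DAGG_f(M_1,M_2)$ is the language model $M$ with $p_M(t\mid c):=\frac{M(t\mid c)}{\sum_{t'\in\Sigma}M(t'\mid c)}$. Define $\overline{f_c}(M_1,M_2):=GM\big(M(t\mid c)^{-1}\big)$. *)

theory Defs
  imports Complex_Main
begin

text \<open>Tokens form a finite type 'a (the alphabet Sigma, n = CARD('a)); contexts are
  finite token sequences ('a list). A language model is a function
  M :: 'a list => 'a => real with M c t = p_M(t | c).\<close>

type_synonym 'a lm = "'a list \<Rightarrow> 'a \<Rightarrow> real"

definition is_LM :: "('a::finite) lm \<Rightarrow> bool" where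
  "is_LM M \<longleftrightarrow> (\<forall>c t. M c t > 0) \<and> (\<forall>c. (\<Sum>t\<in>UNIV. M c t) = 1)"

definition GM :: "(('a::finite) \<Rightarrow> real) \<Rightarrow> real" where
  "GM g = exp ((1 / real (card (UNIV :: 'a set))) * (\<Sum>t\<in>UNIV. ln (g t)))"

definition tp :: "('a::finite) lm \<Rightarrow> 'a list \<Rightarrow> real" where
  "tp M c = GM (\<lambda>t. M c t)"

definition rp :: "('a::finite) lm \<Rightarrow> 'a list \<Rightarrow> 'a \<Rightarrow> real" where
  "rp M c t = M c t / tp M c"

definition tpr :: "('a::finite) lm \<Rightarrow> 'a lm \<Rightarrow> 'a list \<Rightarrow> real" where
  "tpr M1 M2 c = GM (\<lambda>t. M1 c t / M2 c t)"

definition exposed :: "('a::finite) lm \<Rightarrow> 'a lm \<Rightarrow> 'a list \<Rightarrow> 'a \<Rightarrow> real \<Rightarrow> bool" where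
  "exposed M1 M2 c t \<alpha> \<longleftrightarrow> M1 c t / (M2 c t * tpr M1 M2 c) = \<alpha>"

definition le_exposed :: "('a::finite) lm \<Rightarrow> 'a lm \<Rightarrow> 'a list \<Rightarrow> 'a \<Rightarrow> real \<Rightarrow> bool" where
  "le_exposed M1 M2 c t \<alpha> \<longleftrightarrow> (\<exists>\<beta>. \<beta> \<le> \<alpha> \<and> exposed M1 M2 c t \<beta>)"

definition proper_avg :: "(real \<Rightarrow> real \<Rightarrow> real) \<Rightarrow> bool" where
  "proper_avg f \<longleftrightarrow> (\<forall>x y. x > 0 \<longrightarrow> y > 0 \<longrightarrow> min x y \<le> f x y \<and> f x y \<le> max x y)"

definition min_bounded :: "(real \<Rightarrow> real \<Rightarrow> real) \<Rightarrow> real \<Rightarrow> bool" where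
  "min_bounded f lam \<longleftrightarrow> proper_avg f \<and>
     (\<forall>x y. x > 0 \<longrightarrow> y > 0 \<longrightarrow> f x y \<le> lam * min x y)"

definition Mf :: "(real \<Rightarrow> real \<Rightarrow> real) \<Rightarrow> ('a::finite) lm \<Rightarrow> 'a lm \<Rightarrow> 'a lm" where
  "Mf f M1 M2 c t = f (rp M1 c t) (rp M2 c t)"

definition DAGG :: "(real \<Rightarrow> real \<Rightarrow> real) \<Rightarrow> ('a::finite) lm \<Rightarrow> 'a lm \<Rightarrow> 'a lm" where
  "DAGG f M1 M2 c t = Mf f M1 M2 c t / (\<Sum>t'\<in>UNIV. Mf f M1 M2 c t')"

definition fbar :: "(real \<Rightarrow> real \<Rightarrow> real) \<Rightarrow> ('a::finite) lm \<Rightarrow> 'a lm \<Rightarrow> 'a list \<Rightarrow> real" where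
  "fbar f M1 M2 c = GM (\<lambda>t. inverse (Mf f M1 M2 c t))"

end

theory Submission
  imports Defs
begin

lemma GM_pos: "GM g > 0"
  unfolding GM_def by simp

lemma GM_div:
  fixes g h :: "('a::finite) \<Rightarrow> real"
  assumes "\<And>t. g t > 0" "\<And>t. h t > 0"
  shows "GM (\<lambda>t. g t / h t) = GM g / GM h"
proof -
  have "(\<Sum>t\<in>UNIV. ln (g t / h t)) = (\<Sum>t\<in>UNIV. ln (g t)) - (\<Sum>t\<in>UNIV. ln (h t))"
  proof -
    have "(\<Sum>t\<in>UNIV. ln (g t / h t)) = (\<Sum>t\<in>UNIV. ln (g t) - ln (h t))"
      proof (intro sum.cong refl)
      fix x show "ln (g x / h x) = ln (g x) - ln (h x)"
        using assms(1)[of x] assms(2)[of x] by (simp add: ln_div)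
    qed
    then show ?thesis by (simp add: sum_subtractf)
  qed
  then show ?thesis unfolding GM_def by (simp add: right_diff_distrib exp_diff)
qed

lemma GM_inv:
  fixes g :: "('a::finite) \<Rightarrow> real"
  assumes "\<And>t. g t > 0"
  shows "GM (\<lambda>t. inverse (g t)) = 1 / GM g"
proof -
  have "(\<Sum>t\<in>UNIV. ln (inverse (g t))) = - (\<Sum>t\<in>UNIV. ln (g t))"
    using assms by (simp add: ln_inverse sum_negf)
  then show ?thesis unfolding GM_def by (simp add: exp_minus field_simps)
qed

lemma GM_const:
  assumes "S > 0"
  shows "GM (\<lambda>t::'a::finite. S) = S"
proof -
  have "card (UNIV :: 'a set) > 0" by (simp add: finite_UNIV_card_ge_0)
  then show ?thesis unfolding GM_def using assms by simp
qed

theorem corollary1: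
  fixes M1 M2 Mb :: "('a::finite) lm" and c :: "'a list" and t :: 'a
    and f :: "real \<Rightarrow> real \<Rightarrow> real" and lam \<alpha> \<beta> :: real
  assumes "is_LM M1" and "is_LM M2" and "is_LM Mb"
    and "min_bounded f lam"
    and "exposed M1 Mb c t \<alpha>" and "exposed M2 Mb c t \<beta>"
  shows "le_exposed (DAGG f M1 M2) Mb c t (lam * fbar f M1 M2 c * min \<alpha> \<beta>)"
proof -
  define m where "m = Mf f M1 M2 c"
  define S where "S = (\<Sum>t'\<in>UNIV. m t')"
  have p1: "\<And>t. M1 c t > 0" and p2: "\<And>t. M2 c t > 0" and pb: "\<And>t. Mb c t > 0"
    using assms(1-3) unfolding is_LM_def by auto
  have r1: "\<And>t. rp M1 c t > 0" and r2: "\<And>t. rp M2 c t > 0"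
    unfolding rp_def tp_def using p1 p2 GM_pos by (fastforce intro: divide_pos_pos)+
  have mpos: "\<And>t. m t > 0"
  proof -
    fix t
    have "min (rp M1 c t) (rp M2 c t) \<le> m t"
      using assms(4) r1[of t] r2[of t] unfolding min_bounded_def proper_avg_def m_def Mf_def by blast
    then show "m t > 0" using r1[of t] r2[of t] by linarith
  qed
  have Spos: "S > 0" unfolding S_def using mpos by (simp add: sum_pos)
  have mle: "m t \<le> lam * min (rp M1 c t) (rp M2 c t)"
    using assms(4) r1[of t] r2[of t] unfolding min_bounded_def m_def Mf_def by blast
  have D: "DAGG f M1 M2 c = (\<lambda>t. m t / S)"
    unfolding DAGG_def m_def S_def by auto
  have Dpos: "\<And>t. m t / S > 0" using mpos Spos by simp
  have GMD: "GM (\<lambda>t. m t / S) = GM m / S"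
  proof -
    have "GM (\<lambda>_::'a. S) = S" by (rule GM_const[OF Spos])
    then show ?thesis using GM_div[of m "\<lambda>_. S", OF mpos] Spos by simp
  qed
  have tprD: "tpr (DAGG f M1 M2) Mb c = (GM m / S) / GM (Mb c)"
    unfolding tpr_def D using GM_div[of "\<lambda>t. m t / S" "Mb c", OF Dpos pb] GMD by simp
  have fb: "fbar f M1 M2 c = 1 / GM m"
    unfolding fbar_def m_def[symmetric] using GM_inv[of m, OF mpos] by simp
  have tpr1: "tpr M1 Mb c = GM (M1 c) / GM (Mb c)"
    unfolding tpr_def using GM_div[of "M1 c" "Mb c", OF p1 pb] by simp
  have tpr2: "tpr M2 Mb c = GM (M2 c) / GM (Mb c)"
    unfolding tpr_def using GM_div[of "M2 c" "Mb c", OF p2 pb] by simp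
  define q where "q = GM (Mb c) / Mb c t"
  have qpos: "q > 0" unfolding q_def using GM_pos[of "Mb c"] pb[of t] by simp
  have a: "\<alpha> = rp M1 c t * q"
    using assms(5) GM_pos[of "M1 c"] GM_pos[of "Mb c"] pb[of t] unfolding exposed_def tpr1 rp_def tp_def q_def
    by (auto simp: field_simps)
  have b: "\<beta> = rp M2 c t * q"
    using assms(6) GM_pos[of "M2 c"] GM_pos[of "Mb c"] pb[of t] unfolding exposed_def tpr2 rp_def tp_def q_def
    by (auto simp: field_simps)
  define E where "E = m t * q / GM m"
  have ex: "exposed (DAGG f M1 M2) Mb c t E"
    unfolding exposed_def tprD E_def q_def using D Spos GM_pos[of m] GM_pos[of "Mb c"] pb[of t]
    by (simp add: field_simps)
  have mq: "min \<alpha> \<beta> = min (rp M1 c t) (rp M2 c t) * q"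
    unfolding a b using qpos by (simp add: min_mult_distrib_right)
  have "E \<le> lam * min (rp M1 c t) (rp M2 c t) * q / GM m"
    unfolding E_def using mle qpos GM_pos[of m]
    by (simp add: divide_right_mono mult_right_mono)
  also have "\<dots> = lam * fbar f M1 M2 c * min \<alpha> \<beta>"
    unfolding fb mq by simp
  finally show ?thesis unfolding le_exposed_def using ex by blast
qed

end
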